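(* Let $K\ge2$ and $d\ge1$ with $d=2$ or $K\le d+1$. Then the Tammes problem and the Softmax Code problem have the same solutions: $$\operatorname{argmax}_{\mathbf W\in\mathrm{OB}(d,K)}\rho_{\text{one-vs-rest}}(\mathbf W)=\operatorname{argmax}_{\mathbf W\in\mathrm{OB}(d,K)}\rho_{\text{one-vs-one}}(\mathbf W).$$
   Context: $\mathrm{OB}(d,K)$ is the set of real $d\times K$ matrices with unit-norm columns $\mathbf w_1,\dots,\mathbf w_K$. $\operatorname{dist}(\mathbf v,\mathcal W)=\inf\{\|\mathbf v-\mathbf w\|_2:\mathbf w\in\operatorname{conv}(\mathcal W)\}$; $\rho_{\text{one-vs-rest}}(\mathbf W)=\min_k\operatorname{dist}(\mathbf w_k,\{\mathbf w_j\}_{j\ne k})$; $\rho_{\text{one-vs-one}}(\mathbf W)=\min_k\min_{k'\ne k}\|\mathbf w_k-\mathbf w_{k'}\|_2$. *)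

theory Defs
  imports "HOL-Analysis.Analysis"
begin

text \<open>A d x K real matrix is a value of type real^'k^'d (rows indexed by 'd,
 columns by 'k), with d = CARD('d), K = CARD('k). Column k is column k W.\<close>

definition OB :: "(real^'k^'d) set" where
  "OB = {W. \<forall>k. norm (column k W) = 1}"

definition dist_hull :: "'a::euclidean_space \<Rightarrow> 'a set \<Rightarrow> real" where
  "dist_hull v S = Inf {norm (v - w) | w. w \<in> convex hull S}"

definition rho_one_vs_rest :: "real^'k^'d \<Rightarrow> real" where
  "rho_one_vs_rest W =
     Min (range (\<lambda>k::'k. dist_hull (column k W) {column j W | j. j \<noteq> k}))"

definition rho_one_vs_one :: "real^'k^'d \<Rightarrow> real" where
  "rho_one_vs_one W =
     Min (range (\<lambda>k::'k. Min ((\<lambda>k'. norm (column k W - column k' W)) ` (UNIV - {k}))))"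

definition argmax_on :: "'a set \<Rightarrow> ('a \<Rightarrow> real) \<Rightarrow> 'a set" where
  "argmax_on A f = {x \<in> A. \<forall>y\<in>A. f y \<le> f x}"

end

theory Submission
  imports Defs
begin

definition DH :: "real^'k^'d \<Rightarrow> 'k \<Rightarrow> real" where
  "DH W k = dist_hull (column k W) {column j W | j. j \<noteq> k}"

definition QQ :: "real \<Rightarrow> real^'k^'d \<Rightarrow> bool" where
  "QQ c W = (\<forall>i j. i \<noteq> j \<longrightarrow> column i W \<bullet> column j W \<le> c)"

lemma card_ge2_other:
  assumes "CARD('k::finite) \<ge> 2"
  shows "UNIV - {k::'k} \<noteq> {}"
proof
  assume "UNIV - {k} = {}"
  then have "(UNIV::'k set) = {k}" by auto
  then have "CARD('k) = card {k}" by (simp only:)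
  then have "CARD('k) = 1" by simp
  with assms show False by simp
qed

lemma others_ne:
  assumes "CARD('k::finite) \<ge> 2"
  shows "{column j W | j. j \<noteq> (k::'k)} \<noteq> {}"
  using card_ge2_other[OF assms, of k] by auto

lemma rho_ovr_ge: "M \<le> rho_one_vs_rest W \<longleftrightarrow> (\<forall>k. M \<le> DH W k)"
  unfolding rho_one_vs_rest_def DH_def
  by (subst Min_ge_iff) auto

lemma rho_ovr_le: "rho_one_vs_rest W \<le> DH W k"
  unfolding rho_one_vs_rest_def DH_def
  by (rule Min_le) auto

lemma rho_1v1_ge:
  assumes "CARD('k::finite) \<ge> 2"
  shows "M \<le> rho_one_vs_one (W::real^'k^'d) \<longleftrightarrow>
     (\<forall>k k'. k \<noteq> k' \<longrightarrow> M \<le> norm (column k W - column k' W))"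
proof -
  have "M \<le> Min ((\<lambda>k'. norm (column k W - column k' W)) ` (UNIV - {k}))
     \<longleftrightarrow> (\<forall>k'. k \<noteq> k' \<longrightarrow> M \<le> norm (column k W - column k' W))" for k
    using card_ge2_other[OF assms, of k] by (subst Min_ge_iff) auto
  then show ?thesis unfolding rho_one_vs_one_def by (subst Min_ge_iff) auto
qed

lemma rho_1v1_le:
  assumes "k \<noteq> k'"
  shows "rho_one_vs_one (W::real^'k::finite^'d) \<le> norm (column k W - column k' W)"
proof -
  have "rho_one_vs_one W \<le> Min ((\<lambda>k'. norm (column k W - column k' W)) ` (UNIV - {k}))"
    unfolding rho_one_vs_one_def by (rule Min_le) auto
  also have "\<dots> \<le> norm (column k W - column k' W)"
    using assms by (intro Min_le) auto
  finally show ?thesis .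
qed

lemma dh_le:
  assumes "p \<in> convex hull S"
  shows "dist_hull v S \<le> norm (v - p)"
  unfolding dist_hull_def
  by (rule cInf_lower) (use assms in \<open>auto intro!: bdd_belowI[where m=0]\<close>)

lemma dh_ge:
  assumes "S \<noteq> {}" "\<And>p. p \<in> convex hull S \<Longrightarrow> M \<le> norm (v - p)"
  shows "M \<le> dist_hull v S"
  unfolding dist_hull_def
proof (rule cInf_greatest)
  obtain s where "s \<in> S" using assms by auto
  then have "s \<in> convex hull S" by (simp add: hull_inc)
  then show "{norm (v - w) |w. w \<in> convex hull S} \<noteq> {}" by auto
qed (use assms in auto)

lemma dh_lower_unit:
  assumes "norm v = 1" "S \<noteq> {}" "\<And>s. s \<in> S \<Longrightarrow> v \<bullet> s \<le> c"
  shows "1 - c \<le> dist_hull v S"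
proof (rule dh_ge[OF assms(2)])
  fix p assume p: "p \<in> convex hull S"
  have "convex hull S \<subseteq> {x. v \<bullet> x \<le> c}"
    by (rule hull_minimal) (use assms(3) convex_halfspace_le in auto)
  with p have "v \<bullet> p \<le> c" by auto
  have "v \<bullet> (v - p) \<le> norm v * norm (v - p)" by (rule norm_cauchy_schwarz)
  moreover have "v \<bullet> v = 1" using assms(1) by (simp add: dot_square_norm)
  ultimately show "1 - c \<le> norm (v - p)"
    using \<open>v \<bullet> p \<le> c\<close> assms(1) by (simp add: inner_diff_right)
qed

lemma norm_diff_unit:
  fixes u v :: "'a::real_inner"
  assumes "norm u = 1" "norm v = 1"
  shows "norm (u - v) = sqrt (2 - 2 * (u \<bullet> v))"
proof -
  have "norm (u - v)^2 = 2 - 2 * (u \<bullet> v)"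
  proof -
    have "u \<bullet> u = 1" "v \<bullet> v = 1" using assms by (simp_all add: dot_square_norm)
    then show ?thesis
      by (simp add: power2_norm_eq_inner inner_diff_left inner_diff_right inner_commute)
  qed
  then show ?thesis by (metis norm_ge_zero real_sqrt_unique)
qed

lemma argmax_char:
  assumes "\<And>x. x \<in> A \<Longrightarrow> f x \<le> M"
    and "\<And>x. x \<in> A \<Longrightarrow> M \<le> f x \<longleftrightarrow> Q x"
    and "\<exists>x\<in>A. Q x"
  shows "argmax_on A f = {x\<in>A. Q x}"
proof -
  obtain x0 where x0: "x0 \<in> A" "Q x0" using assms(3) by auto
  show ?thesis
    unfolding argmax_on_def
  proof safe
    fix x assume x: "x \<in> A" "\<forall>y\<in>A. f y \<le> f x"
    then have "M \<le> f x" using x0 assms(2)[of x0] x(2) by force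
    then show "Q x" using assms(2) x by auto
  next
    fix x y assume "x \<in> A" "Q x" "y \<in> A"
    then show "f y \<le> f x" using assms(1)[of y] assms(2)[of x] by auto
  qed
qed

lemma OB_unit: "W \<in> OB \<Longrightarrow> norm (column k W) = 1"
  unfolding OB_def by auto

lemma main_abstract:
  fixes c :: real
  assumes K2: "CARD('k::finite) \<ge> 2" and c1: "c \<le> 1"
  and P1: "\<And>W::real^'k^'d. W \<in> OB \<Longrightarrow> \<exists>i j. i \<noteq> j \<and> c \<le> column i W \<bullet> column j W"
  and P2': "\<And>W::real^'k^'d. W \<in> OB \<Longrightarrow> \<exists>k. DH W k \<le> 1 - c"
  and P2: "\<And>W::real^'k^'d. W \<in> OB \<Longrightarrow> \<forall>k. 1 - c \<le> DH W k \<Longrightarrow> QQ c W"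
  and P3: "\<exists>W::real^'k^'d. W \<in> OB \<and> QQ c W"
  shows "argmax_on (OB :: (real^'k^'d) set) rho_one_vs_rest = argmax_on OB rho_one_vs_one"
proof -
  have "argmax_on (OB :: (real^'k^'d) set) rho_one_vs_rest = {W\<in>OB. QQ c W}"
  proof (rule argmax_char)
    fix W :: "real^'k^'d" assume W: "W \<in> OB"
    show "rho_one_vs_rest W \<le> 1 - c" using P2'[OF W] rho_ovr_le order_trans by blast
    show "1 - c \<le> rho_one_vs_rest W \<longleftrightarrow> QQ c W"
    proof
      assume "1 - c \<le> rho_one_vs_rest W"
      then show "QQ c W" using P2[OF W] rho_ovr_ge by blast
    next
      assume Q: "QQ c W"
      show "1 - c \<le> rho_one_vs_rest W"
        unfolding rho_ovr_ge DH_def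
      proof
        fix k
        show "1 - c \<le> dist_hull (column k W) {column j W |j. j \<noteq> k}"
          by (rule dh_lower_unit[OF OB_unit[OF W] others_ne[OF K2]])
            (use Q in \<open>auto simp: QQ_def\<close>)
      qed
    qed
  qed (use P3 in auto)
  also have "\<dots> = argmax_on OB rho_one_vs_one"
  proof (rule argmax_char[symmetric])
    fix W :: "real^'k^'d" assume W: "W \<in> OB"
    obtain i j where ij: "i \<noteq> j" "c \<le> column i W \<bullet> column j W" using P1[OF W] by auto
    have "rho_one_vs_one W \<le> norm (column i W - column j W)" by (rule rho_1v1_le[OF ij(1)])
    also have "\<dots> \<le> sqrt (2 - 2 * c)"
      using ij(2) by (simp add: norm_diff_unit OB_unit[OF W])
    finally show "rho_one_vs_one W \<le> sqrt (2 - 2 * c)" .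
    show "sqrt (2 - 2 * c) \<le> rho_one_vs_one W \<longleftrightarrow> QQ c W"
      unfolding rho_1v1_ge[OF K2] QQ_def
      by (simp add: norm_diff_unit OB_unit[OF W])
  qed (use P3 in auto)
  finally show ?thesis .
qed


lemma lin_lim:
  fixes \<alpha> \<beta> :: real
  assumes "\<And>t. 0 < t \<Longrightarrow> t \<le> 1 \<Longrightarrow> 0 \<le> \<alpha> + t * \<beta>"
  shows "0 \<le> \<alpha>"
proof (rule ccontr)
  assume "\<not> 0 \<le> \<alpha>"
  then have a: "\<alpha> < 0" by simp
  define t where "t = min 1 (- \<alpha> / (2 * (\<bar>\<beta>\<bar> + 1)))"
  have "0 < - \<alpha> / (2 * (\<bar>\<beta>\<bar> + 1))" by (rule divide_pos_pos) (use a in auto)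
  then have t0: "0 < t" unfolding t_def by simp
  have t1: "t \<le> 1" unfolding t_def by simp
  have "t * (\<bar>\<beta>\<bar> + 1) \<le> - \<alpha> / 2"
  proof -
    have "t \<le> - \<alpha> / (2 * (\<bar>\<beta>\<bar> + 1))" unfolding t_def by simp
    then have "t * (\<bar>\<beta>\<bar> + 1) \<le> - \<alpha> / (2 * (\<bar>\<beta>\<bar> + 1)) * (\<bar>\<beta>\<bar> + 1)"
      by (intro mult_right_mono) auto
    also have "\<dots> = - \<alpha> / 2" by (simp add: field_simps)
    finally show ?thesis .
  qed
  moreover have "t * \<beta> \<le> t * (\<bar>\<beta>\<bar> + 1)" using t0 by (intro mult_left_mono) auto
  ultimately have "\<alpha> + t * \<beta> < 0" using a by linarith
  with assms[OF t0 t1] show False by simp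
qed

lemma P1_simplex:
  assumes K2: "CARD('k::finite) \<ge> 2" and W: "(W::real^'k^'d) \<in> OB"
  shows "\<exists>i j. i \<noteq> j \<and> - 1 / (real CARD('k) - 1) \<le> column i W \<bullet> column j W"
proof (rule ccontr)
  define m where "m = real CARD('k) - 1"
  have m1: "m \<ge> 1" using K2 unfolding m_def by simp
  assume "\<not> ?thesis"
  then have lt: "\<And>i j. i \<noteq> j \<Longrightarrow> column i W \<bullet> column j W < - (1 / m)"
    unfolding m_def by force
  define S where "S = (\<Sum>j\<in>UNIV. column j W)"
  have row: "(\<Sum>j\<in>UNIV. column i W \<bullet> column j W) < 0" for i
  proof -
    have "(\<Sum>j\<in>UNIV. column i W \<bullet> column j W)
        = column i W \<bullet> column i W + (\<Sum>j\<in>UNIV-{i}. column i W \<bullet> column j W)"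
      by (simp add: sum.remove)
    also have "column i W \<bullet> column i W = 1"
      using OB_unit[OF W, of i] by (simp add: dot_square_norm)
    also have "(\<Sum>j\<in>UNIV-{i}. column i W \<bullet> column j W) < (\<Sum>j\<in>UNIV-{i}. - 1 / m)"
    proof (rule sum_strict_mono)
      show "UNIV - {i} \<noteq> {}" by (rule card_ge2_other[OF K2])
    qed (auto intro: lt)
    also have "(\<Sum>j\<in>UNIV-{i}. - 1 / m) = - 1"
      using m1 unfolding m_def by (simp add: card_Diff_subset)
    finally show ?thesis by simp
  qed
  have "(\<Sum>i\<in>UNIV. \<Sum>j\<in>UNIV. column i W \<bullet> column j W) < (\<Sum>i\<in>(UNIV::'k set). 0)"
    by (intro sum_strict_mono row) auto
  moreover have "(\<Sum>i\<in>UNIV. \<Sum>j\<in>UNIV. column i W \<bullet> column j W) = S \<bullet> S"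
    unfolding S_def by (simp only: inner_sum_left inner_sum_right) (rule sum.swap)
  ultimately show False using inner_ge_zero[of S] by simp
qed

lemma norm_comb2:
  fixes x y :: "'a::real_inner"
  shows "norm (a *\<^sub>R x - b *\<^sub>R y)^2 = a^2 * (x \<bullet> x) - 2*a*b*(x \<bullet> y) + b^2*(y \<bullet> y)"
  unfolding power2_norm_eq_inner
  by (simp add: inner_diff_left inner_diff_right inner_commute[of y x] power2_eq_square algebra_simps)

definition cen :: "real^'k^'d \<Rightarrow> 'k \<Rightarrow> real^'d" where
  "cen W k = (1 / (real CARD('k) - 1)) *\<^sub>R ((\<Sum>j\<in>UNIV. column j W) - column k W)"

lemma cen_hull:
  assumes K2: "CARD('k::finite) \<ge> 2"
  shows "cen (W::real^'k^'d) k \<in> convex hull {column j W | j. j \<noteq> k}"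
proof -
  define m where "m = real CARD('k) - 1"
  have m1: "m \<ge> 1" using K2 unfolding m_def by simp
  have "(\<Sum>j\<in>UNIV. column j W) - column k W = (\<Sum>j\<in>UNIV-{k}. column j W)"
    by (simp add: sum_diff1)
  then have "cen W k = (\<Sum>j\<in>UNIV-{k}. (1/m) *\<^sub>R column j W)"
    unfolding cen_def m_def by (simp add: scaleR_sum_right)
  also have "\<dots> \<in> convex hull {column j W | j. j \<noteq> k}"
  proof (rule convex_sum)
    show "(\<Sum>i\<in>UNIV - {k}. 1 / m) = 1"
      using m1 unfolding m_def by (simp add: card_Diff_subset)
  qed (use m1 in \<open>auto intro: hull_inc\<close>)
  finally show ?thesis .
qed

lemma cen_sumsq:
  assumes K2: "CARD('k::finite) \<ge> 2" and W: "(W::real^'k^'d) \<in> OB"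
  shows "(\<Sum>k\<in>UNIV. norm (column k W - cen W k)^2)
     = (real CARD('k)^3 - real CARD('k) * ((\<Sum>j\<in>UNIV. column j W) \<bullet> (\<Sum>j\<in>UNIV. column j W)))
        / (real CARD('k) - 1)^2"
proof -
  define m where "m = real CARD('k) - 1"
  define K where "K = real CARD('k)"
  define S where "S = (\<Sum>j\<in>UNIV. column j W)"
  have m1: "m \<ge> 1" using K2 unfolding m_def by simp
  have Km: "K = m + 1" unfolding K_def m_def by simp
  have e: "column k W - cen W k = (1/m) *\<^sub>R (K *\<^sub>R column k W - S)" for k
  proof -
    have c: "cen W k = (1/m) *\<^sub>R (S - column k W)"
      unfolding cen_def m_def S_def ..
    have "(1/m) *\<^sub>R (K *\<^sub>R column k W - S) = ((1/m)*K) *\<^sub>R column k W - (1/m) *\<^sub>R S"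
      by (simp add: scaleR_diff_right)
    also have "(1/m)*K = 1 + 1/m" using m1 unfolding Km by (simp add: field_simps)
    finally have r: "(1/m) *\<^sub>R (K *\<^sub>R column k W - S) = column k W + (1/m) *\<^sub>R column k W - (1/m) *\<^sub>R S"
      by (simp add: scaleR_add_left)
    have "column k W - cen W k = column k W + (1/m) *\<^sub>R column k W - (1/m) *\<^sub>R S"
      unfolding c by (simp add: scaleR_diff_right)
    then show ?thesis using r by simp
  qed
  have n: "norm (column k W - cen W k)^2 = (K^2 - 2 * K * (column k W \<bullet> S) + S \<bullet> S) / m^2" for k
  proof -
    have u: "column k W \<bullet> column k W = 1" using OB_unit[OF W, of k] by (simp add: dot_square_norm)
    have "norm (column k W - cen W k)^2 = (1/m)^2 * norm (K *\<^sub>R column k W - 1 *\<^sub>R S)^2"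
      unfolding e using m1 by (simp add: power_divide)
    also have "norm (K *\<^sub>R column k W - 1 *\<^sub>R S)^2 = K^2 - 2 * K * (column k W \<bullet> S) + S \<bullet> S"
      unfolding norm_comb2 u by simp
    finally show ?thesis by (simp add: power_divide)
  qed
  have ss: "(\<Sum>k\<in>UNIV. column k W \<bullet> S) = S \<bullet> S"
    unfolding S_def by (simp only: inner_sum_left)
  have cK: "(\<Sum>k\<in>(UNIV::'k set). c) = K * c" for c unfolding K_def by simp
  have "(\<Sum>k\<in>UNIV. norm (column k W - cen W k)^2)
      = (\<Sum>k\<in>UNIV. K^2 - 2 * K * (column k W \<bullet> S) + S \<bullet> S) / m^2"
    unfolding n by (simp add: sum_divide_distrib)
  also have "(\<Sum>k\<in>UNIV. K^2 - 2 * K * (column k W \<bullet> S) + S \<bullet> S)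
      = (\<Sum>k\<in>(UNIV::'k set). K^2) - 2 * K * (\<Sum>k\<in>UNIV. column k W \<bullet> S) + (\<Sum>k\<in>(UNIV::'k set). S \<bullet> S)"
    by (simp add: sum.distrib sum_subtractf sum_distrib_left)
  also have "\<dots> = K^3 - K * (S \<bullet> S)"
    unfolding ss cK by (simp add: power3_eq_cube power2_eq_square algebra_simps)
  finally show ?thesis unfolding K_def m_def S_def .
qed

lemma P2'_simplex:
  assumes K2: "CARD('k::finite) \<ge> 2" and W: "(W::real^'k^'d) \<in> OB"
  shows "\<exists>k. DH W k \<le> 1 - (- 1 / (real CARD('k) - 1))"
proof (rule ccontr)
  define m where "m = real CARD('k) - 1"
  define K where "K = real CARD('k)"
  define S where "S = (\<Sum>j\<in>UNIV. column j W)"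
  have m1: "m \<ge> 1" using K2 unfolding m_def by simp
  have Km: "K = m + 1" unfolding K_def m_def by simp
  assume "\<not> ?thesis"
  moreover have "1 - - 1 / m = K / m" using m1 unfolding Km by (simp add: field_simps)
  ultimately have DK: "K / m < DH W k" for k
    unfolding m_def[symmetric] by (simp add: not_le)
  have "K / m < norm (column k W - cen W k)" for k
    using DK[of k] dh_le[OF cen_hull[OF K2, of W k], of "column k W"] unfolding DH_def by linarith
  then have "(K / m)^2 < norm (column k W - cen W k)^2" for k
    using m1 Km by (intro power_strict_mono) auto
  then have "(\<Sum>k\<in>(UNIV::'k set). (K / m)^2) < (\<Sum>k\<in>UNIV. norm (column k W - cen W k)^2)"
    by (intro sum_strict_mono) auto
  also have "\<dots> = (K^3 - K * (S \<bullet> S)) / m^2"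
    unfolding cen_sumsq[OF K2 W] K_def m_def S_def ..
  also have "\<dots> \<le> K^3 / m^2"
    using m1 Km by (intro divide_right_mono) (auto simp: inner_ge_zero)
  finally show False unfolding K_def by (simp add: power2_eq_square power3_eq_cube field_simps)
qed

lemma P2_simplex:
  assumes K2: "CARD('k::finite) \<ge> 2" and W: "(W::real^'k^'d) \<in> OB"
    and D: "\<forall>k. 1 - (- 1 / (real CARD('k) - 1)) \<le> DH W k"
  shows "QQ (- 1 / (real CARD('k) - 1)) W"
proof -
  define m where "m = real CARD('k) - 1"
  define K where "K = real CARD('k)"
  define S where "S = (\<Sum>j\<in>UNIV. column j W)"
  have m1: "m \<ge> 1" using K2 unfolding m_def by simp
  have Km: "K = m + 1" unfolding K_def m_def by simp
  have "1 - - 1 / m = K / m" using m1 unfolding Km by (simp add: field_simps)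
  then have DK: "K / m \<le> DH W k" for k
    using D unfolding m_def[symmetric] by simp
  have "K / m \<le> norm (column k W - cen W k)" for k
    using DK[of k] dh_le[OF cen_hull[OF K2, of W k], of "column k W"] unfolding DH_def by linarith
  then have "(K / m)^2 \<le> norm (column k W - cen W k)^2" for k
    using m1 Km by (intro power_mono) auto
  then have "(\<Sum>k\<in>(UNIV::'k set). (K / m)^2) \<le> (\<Sum>k\<in>UNIV. norm (column k W - cen W k)^2)"
    by (intro sum_mono) auto
  also have "\<dots> = (K^3 - K * (S \<bullet> S)) / m^2"
    unfolding cen_sumsq[OF K2 W] K_def m_def S_def ..
  finally have "K^3 / m^2 \<le> (K^3 - K * (S \<bullet> S)) / m^2"
    unfolding K_def by (simp add: power2_eq_square power3_eq_cube)
  then have "K * (S \<bullet> S) \<le> 0" using m1 by (simp add: divide_right_mono_neg field_simps)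
  then have "S \<bullet> S \<le> 0" using Km m1 by (simp add: mult_le_0_iff)
  then have S0: "S = 0" by (metis inner_eq_zero_iff inner_ge_zero order_antisym)
  then have cen0: "cen W k = - (1/m) *\<^sub>R column k W" for k
    unfolding cen_def m_def[symmetric] S_def[symmetric] by simp
  show ?thesis unfolding QQ_def
  proof (intro allI impI)
    fix k j :: 'k assume kj: "k \<noteq> j"
    define g where "g = column k W \<bullet> column j W"
    have uk: "column k W \<bullet> column k W = 1" using OB_unit[OF W, of k] by (simp add: dot_square_norm)
    have uj: "column j W \<bullet> column j W = 1" using OB_unit[OF W, of j] by (simp add: dot_square_norm)
    define q where "q = 1/m"
    define A where "A = 1 + q"
    have KA: "K / m = A" unfolding A_def q_def Km using m1 by (simp add: field_simps)
    have A0: "A > 0" using m1 unfolding A_def q_def by (simp add: add_pos_pos)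
    have "0 \<le> (- 2 * A * (q + g)) + t * (q^2 + 2*g*q + 1)" if t: "0 < t" "t \<le> 1" for t
    proof -
      define p where "p = (1 - t) *\<^sub>R cen W k + t *\<^sub>R column j W"
      have "p \<in> convex hull {column j W | j. j \<noteq> k}"
        unfolding p_def
        by (rule convexD[OF convex_convex_hull cen_hull[OF K2]]) (use t kj in \<open>auto intro!: hull_inc\<close>)
      then have "K / m \<le> norm (column k W - p)"
        using DK[of k] dh_le[of p _ "column k W"] unfolding DH_def by (meson order_trans)
      then have "(K / m)^2 \<le> norm (column k W - p)^2"
        using m1 Km by (intro power_mono) auto
      also have "column k W - p = (A - t * q) *\<^sub>R column k W - t *\<^sub>R column j W"
      proof -
        have "column k W - p = column k W + ((1 - t) * q) *\<^sub>R column k W - t *\<^sub>R column j W"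
          unfolding p_def cen0 q_def by (simp add: algebra_simps)
        also have "\<dots> = (A - t * q) *\<^sub>R column k W - t *\<^sub>R column j W"
          unfolding A_def q_def[symmetric] by (simp add: algebra_simps)
        finally show ?thesis .
      qed
      also have "norm \<dots>^2 = (A - t * q)^2 - 2 * t * (A - t * q) * g + t^2"
        unfolding norm_comb2 uk uj g_def by simp
      finally have "A^2 \<le> (A - t * q)^2 - 2 * t * (A - t * q) * g + t^2"
        using KA by simp
      moreover have "(A - t * q)^2 - 2 * t * (A - t * q) * g + t^2 - A^2
          = t * ((- 2 * A * (q + g)) + t * (q^2 + 2*g*q + 1))"
        by (simp add: power2_eq_square algebra_simps)
      ultimately have "0 \<le> t * ((- 2 * A * (q + g)) + t * (q^2 + 2*g*q + 1))"
        by linarith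
      then show ?thesis using t by (simp add: zero_le_mult_iff)
    qed
    then have "0 \<le> - 2 * A * (q + g)" by (rule lin_lim)
    then have "q + g \<le> 0" using A0 by (simp add: mult_le_0_iff)
    then show "column k W \<bullet> column j W \<le> - 1 / (real CARD('k) - 1)"
      unfolding g_def q_def m_def by simp
  qed
qed


lemma simplex_alg:
  fixes m :: real
  assumes m1: "m \<ge> 1"
  defines "sm \<equiv> sqrt m"
  defines "a \<equiv> sqrt ((m + 1) / m)"
  defines "b \<equiv> (1 / sm - a) / m"
  shows "a + b * m = 1 / sm" "a^2 + 2*a*b + b^2 * m = 1" "2*a*b + b^2 * m = - 1 / m"
    "(1/sm)^2 * m = 1"
proof -
  have sm2: "sm^2 = m" unfolding sm_def using m1 by simp
  have sm0: "sm > 0" unfolding sm_def using m1 by simp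
  have a2: "a^2 = (m + 1) / m" unfolding a_def using m1 by simp
  show ab: "a + b * m = 1 / sm" unfolding b_def using m1 by simp
  have "b * m = 1/sm - a" using ab by simp
  have "2*a*b + b^2 * m = b * (2*a + b*m)" by (simp add: power2_eq_square algebra_simps)
  also have "2*a + b*m = a + 1/sm" using ab by simp
  also have "b * (a + 1/sm) = ((1/sm)^2 - a^2) / m"
    unfolding b_def by (simp add: power2_eq_square algebra_simps)
  also have "(1/sm)^2 = 1/m" using sm2 by (simp add: power_divide)
  also have "(1/m - a^2) / m = - 1 / m" unfolding a2 using m1 by (simp add: field_simps)
  finally show c: "2*a*b + b^2 * m = - 1 / m" .
  have "a^2 + 2*a*b + b^2 * m = (m+1)/m + (-1/m)" using c a2 by simp
  also have "\<dots> = 1" using m1 by (simp add: field_simps)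
  finally show "a^2 + 2*a*b + b^2 * m = 1" .
  show "(1/sm)^2 * m = 1" using sm2 m1 by (simp add: power_divide)
qed

lemma column_mk: "column i (\<chi> r j. v j $ r) = (v i :: real^'d)"
  by (simp add: column_def vec_eq_iff)

lemma P3_simplex:
  assumes K2: "CARD('k::finite) \<ge> 2" and Kd: "CARD('k) \<le> CARD('d::finite) + 1"
  shows "\<exists>W::real^'k^'d. W \<in> OB \<and> QQ (- 1 / (real CARD('k) - 1)) W"
proof -
  define k0 :: 'k where "k0 = undefined"
  define m where "m = real CARD('k) - 1"
  have m1: "m \<ge> 1" using K2 unfolding m_def by simp
  have "card (UNIV - {k0}) \<le> card (UNIV::'d set)"
    using Kd by (simp add: card_Diff_subset)
  then obtain f :: "'k \<Rightarrow> 'd" where f: "inj_on f (UNIV - {k0})"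
    using card_le_inj[of "UNIV - {k0}" "UNIV::'d set"] by auto
  define sm where "sm = sqrt m"
  define a where "a = sqrt ((m + 1) / m)"
  define b where "b = (1 / sm - a) / m"
  note alg = simplex_alg[OF m1, folded sm_def, folded a_def, folded b_def]
  define e :: "'k \<Rightarrow> real^'d" where "e i = axis (f i) 1" for i
  define u where "u = (\<Sum>i\<in>UNIV-{k0}. e i)"
  define v where "v k = (if k = k0 then (- (1/sm)) *\<^sub>R u else a *\<^sub>R e k + b *\<^sub>R u)" for k
  define W :: "real^'k^'d" where "W = (\<chi> r j. v j $ r)"
  have col: "column i W = v i" for i unfolding W_def by (rule column_mk)
  have ee: "e i \<bullet> e j = (if i = j then 1 else 0)" if "i \<noteq> k0" "j \<noteq> k0" for i j
    using f that unfolding e_def inj_on_def by (auto simp: inner_axis_axis)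
  have ue: "u \<bullet> e i = 1" if "i \<noteq> k0" for i
  proof -
    have "u \<bullet> e i = (\<Sum>j\<in>UNIV-{k0}. e j \<bullet> e i)" unfolding u_def by (simp add: inner_sum_left)
    also have "\<dots> = (\<Sum>j\<in>UNIV-{k0}. if j = i then 1 else 0)"
      by (rule sum.cong) (use ee that in auto)
    also have "\<dots> = 1" using that by simp
    finally show ?thesis .
  qed
  have uu: "u \<bullet> u = m"
  proof -
    have "u \<bullet> u = (\<Sum>j\<in>UNIV-{k0}. u \<bullet> e j)" unfolding u_def by (simp add: inner_sum_right)
    also have "\<dots> = (\<Sum>j\<in>UNIV-{k0}. 1)" by (rule sum.cong) (use ue in auto)
    also have "\<dots> = m" unfolding m_def by (simp add: card_Diff_subset)
    finally show ?thesis .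
  qed
  have eu: "e i \<bullet> u = 1" if "i \<noteq> k0" for i using ue[OF that] by (simp add: inner_commute)
  have vv: "v i \<bullet> v j = (if i = j then 1 else - 1 / m)" for i j
  proof (cases "i = k0")
    case True
    show ?thesis
    proof (cases "j = k0")
      case True
      then show ?thesis using \<open>i = k0\<close> alg(4) unfolding v_def using m1 by (simp add: uu power2_eq_square)
    next
      case False
      have "v i \<bullet> v j = - (1/sm) * (a * (u \<bullet> e j) + b * (u \<bullet> u))"
        unfolding v_def using True False by (simp add: inner_add_right add_divide_distrib)
      also have "\<dots> = - (1/sm) * (a + b * m)" using ue[OF False] uu by simp
      also have "\<dots> = - 1 / m" using alg(1) alg(4) by (simp add: power2_eq_square)
      finally show ?thesis using True False by simp
    qed
  next
    case False
    show ?thesis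
    proof (cases "j = k0")
      case True
      have "v i \<bullet> v j = - (1/sm) * (a * (e i \<bullet> u) + b * (u \<bullet> u))"
        unfolding v_def using True False by (simp add: inner_add_left add_divide_distrib)
      also have "\<dots> = - (1/sm) * (a + b * m)" using eu[OF False] uu by simp
      also have "\<dots> = - 1 / m" using alg(1) alg(4) by (simp add: power2_eq_square)
      finally show ?thesis using True False by simp
    next
      case j: False
      have "v i \<bullet> v j = a * a * (e i \<bullet> e j) + a * b * (e i \<bullet> u) + b * a * (u \<bullet> e j) + b * b * (u \<bullet> u)"
        unfolding v_def using j False by (simp add: inner_add_left inner_add_right algebra_simps)
      also have "\<dots> = a^2 * (e i \<bullet> e j) + 2 * a * b + b^2 * m"
        using eu[OF False] ue[OF j] uu by (simp add: power2_eq_square algebra_simps)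
      finally show ?thesis using alg(2,3) ee[OF False j] by auto
    qed
  qed
  have "W \<in> OB" unfolding OB_def
    by (auto simp: col norm_eq_sqrt_inner vv)
  moreover have "QQ (- 1 / (real CARD('k) - 1)) W"
    unfolding QQ_def col vv m_def by simp
  ultimately show ?thesis by blast
qed


lemma norm_comb3:
  fixes w x y :: "'a::real_inner"
  assumes "w \<bullet> w = 1" "x \<bullet> x = 1" "y \<bullet> y = 1"
  shows "norm (w - (l *\<^sub>R x + (1 - l) *\<^sub>R y))^2
     = 1 + l^2 + (1-l)^2 - 2*l*(w \<bullet> x) - 2*(1-l)*(w \<bullet> y) + 2*l*(1-l)*(x \<bullet> y)"
  unfolding power2_norm_eq_inner
  by (simp add: inner_diff_left inner_diff_right inner_add_left inner_add_right assms
      inner_commute[of x w] inner_commute[of y w] inner_commute[of y x] power2_eq_square algebra_simps)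

lemma foot_alg:
  fixes C S cd mu l :: real
  assumes "S^2 + C^2 = 1" "(mu * S)^2 + cd^2 = 1" "l = (1 - mu) / 2"
  shows "1 + l^2 + (1-l)^2 - 2*l*(C*cd - S*(mu*S)) - 2*(1-l)*(C*cd + S*(mu*S)) + 2*l*(1-l)*(C^2 - S^2)
     = (cd - C)^2"
  using assms by algebra

lemma foot:
  fixes w x y :: "'a::real_inner"
  assumes u: "w \<bullet> w = 1" "x \<bullet> x = 1" "y \<bullet> y = 1"
    and wx: "w \<bullet> x = cos a" and wy: "w \<bullet> y = cos b" and xy: "x \<bullet> y = cos (a + b)"
    and ab: "0 \<le> a" "0 \<le> b" "a + b \<le> pi"
  shows "\<exists>l. 0 \<le> l \<and> l \<le> 1 \<and> norm (w - (l *\<^sub>R x + (1 - l) *\<^sub>R y)) \<le> cos ((a - b) / 2) - cos ((a + b) / 2)"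
proof -
  define s where "s = (a + b) / 2"
  define d where "d = (a - b) / 2"
  have a_eq: "a = s + d" and b_eq: "b = s - d" and ab_eq: "a + b = 2 * s"
    unfolding s_def d_def by (simp_all add: field_simps)
  have s0: "0 \<le> s" and s1: "s \<le> pi / 2" and ds: "\<bar>d\<bar> \<le> s"
    using ab unfolding s_def d_def by auto
  have S0: "sin s \<ge> 0" using s0 s1 by (intro sin_ge_zero) auto
  have cdC: "cos s \<le> cos d"
  proof -
    have "cos s \<le> cos \<bar>d\<bar>" using ds s1 by (intro cos_monotone_0_pi_le) auto
    then show ?thesis by (cases "d \<ge> 0") auto
  qed
  show ?thesis
  proof (cases "sin s = 0")
    case True
    have "s = 0"
    proof (rule ccontr)
      assume "s \<noteq> 0"
      then have "sin s > 0" using s0 s1 by (intro sin_gt_zero) auto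
      with True show False by simp
    qed
    then have "a = 0" "b = 0" using ab ds unfolding a_eq b_eq by auto
    then have "norm (w - x)^2 = 0"
      using wx u unfolding power2_norm_eq_inner
      by (simp add: inner_diff_left inner_diff_right inner_commute[of x w])
    then have "norm (w - (1 *\<^sub>R x + (1 - 1) *\<^sub>R y)) = 0" by simp
    then show ?thesis using \<open>a = 0\<close> \<open>b = 0\<close> by (intro exI[of _ 1]) auto
  next
    case False
    then have Spos: "sin s > 0" using S0 by simp
    define mu where "mu = sin d / sin s"
    define l where "l = (1 - mu) / 2"
    have sd_le: "\<bar>sin d\<bar> \<le> sin s"
    proof -
      have "sin \<bar>d\<bar> \<le> sin s" using ds s1 by (intro sin_monotone_2pi_le) auto
      moreover have "\<bar>sin d\<bar> = sin \<bar>d\<bar>"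
      proof (cases "d \<ge> 0")
        case True
        then show ?thesis using ds s1 by (simp add: sin_ge_zero)
      next
        case False
        then have "sin (- d) \<ge> 0" using ds s1 by (intro sin_ge_zero) auto
        then show ?thesis using False by simp
      qed
      ultimately show ?thesis by simp
    qed
    have "\<bar>mu\<bar> = \<bar>sin d\<bar> / sin s" unfolding mu_def using Spos by (simp add: abs_divide)
    also have "\<dots> \<le> 1" using sd_le Spos by (simp add: divide_le_eq)
    finally have mu1: "\<bar>mu\<bar> \<le> 1" .
    have l01: "0 \<le> l" "l \<le> 1" unfolding l_def using mu1 by (simp_all add: abs_le_iff)
    have sd: "sin d = mu * sin s" unfolding mu_def using Spos by simp
    have ca: "cos a = cos s * cos d - sin s * (mu * sin s)"
      unfolding a_eq cos_add sd by simp
    have cb: "cos b = cos s * cos d + sin s * (mu * sin s)"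
      unfolding b_eq cos_diff sd by simp
    have cab: "cos (a + b) = (cos s)^2 - (sin s)^2"
      unfolding ab_eq cos_double ..
    have eq: "norm (w - (l *\<^sub>R x + (1 - l) *\<^sub>R y))^2 = (cos d - cos s)^2"
    proof -
      have "norm (w - (l *\<^sub>R x + (1 - l) *\<^sub>R y))^2
         = 1 + l^2 + (1-l)^2 - 2*l*(cos a) - 2*(1-l)*(cos b) + 2*l*(1-l)*(cos (a + b))"
        using norm_comb3[OF u, of l] unfolding wx wy xy .
      also have "\<dots> = 1 + l^2 + (1-l)^2 - 2*l*(cos s * cos d - sin s * (mu * sin s))
          - 2*(1-l)*(cos s * cos d + sin s * (mu * sin s)) + 2*l*(1-l)*((cos s)^2 - (sin s)^2)"
        unfolding ca cb cab ..
      also have "\<dots> = (cos d - cos s)^2"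
      proof (rule foot_alg)
        show "(sin s)^2 + (cos s)^2 = 1" by (rule sin_cos_squared_add)
        have "(sin d)^2 + (cos d)^2 = 1" by (rule sin_cos_squared_add)
        then show "(mu * sin s)^2 + (cos d)^2 = 1" unfolding sd .
        show "l = (1 - mu) / 2" by (rule l_def)
      qed
      finally show ?thesis .
    qed
    have "norm (w - (l *\<^sub>R x + (1 - l) *\<^sub>R y)) \<le> cos d - cos s"
      by (rule power2_le_imp_le) (use eq cdC in simp_all)
    then show ?thesis using l01 unfolding s_def d_def by blast
  qed
qed


lemma cos_shift_int: "cos (x + 2 * pi * of_int n) = cos x"
proof -
  have "cos (2 * pi * of_int n) = 1" "sin (2 * pi * of_int n) = 0"
    using cos_int_2pin[of n] sin_int_2pin[of n] by (simp_all add: mult.assoc)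
  then show ?thesis by (simp add: cos_add)
qed

lemma reg_cos:
  assumes K: "(K::nat) \<ge> 2" and x: "2 * pi / K \<le> x" "x \<le> 2 * pi - 2 * pi / K"
  shows "cos x \<le> cos (2 * pi / K)"
proof -
  have K0: "real K \<ge> 2" using K by simp
  have c0: "0 \<le> 2 * pi / K" by simp
  have c1: "2 * pi / K \<le> pi" using K0 by (simp add: field_simps)
  show ?thesis
  proof (cases "x \<le> pi")
    case True
    then show ?thesis using x c0 by (intro cos_monotone_0_pi_le) auto
  next
    case False
    have "cos x = cos (2 * pi - x)" by (simp add: cos_diff)
    also have "\<dots> \<le> cos (2 * pi / K)" using x False c0 by (intro cos_monotone_0_pi_le) auto
    finally show ?thesis .
  qed
qed

lemma reg_cos_int:
  assumes K: "(K::nat) \<ge> 2" and z: "0 < \<bar>z\<bar>" "\<bar>z\<bar> < int K"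
  shows "cos (2 * pi * of_int z / K) \<le> cos (2 * pi / K)"
proof -
  have "cos (2 * pi * of_int z / K) = cos (2 * pi * of_int \<bar>z\<bar> / K)"
  proof -
    have "2 * pi * of_int \<bar>z\<bar> / K = \<bar>2 * pi * of_int z / K\<bar>" by (simp add: abs_mult)
    then show ?thesis by (simp only: cos_abs_real)
  qed
  also have "\<dots> \<le> cos (2 * pi / K)"
  proof (rule reg_cos[OF K])
    have z1: "1 \<le> real_of_int \<bar>z\<bar>" using z by linarith
    have z2: "real_of_int \<bar>z\<bar> \<le> real K - 1" using z by linarith
    have Kp: "real K > 0" using K by simp
    show "2 * pi / K \<le> 2 * pi * of_int \<bar>z\<bar> / K"
      using z1 Kp by (intro divide_right_mono) auto
    have "2 * pi * of_int \<bar>z\<bar> / K \<le> 2 * pi * (real K - 1) / K"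
      using z2 Kp by (intro divide_right_mono) auto
    also have "\<dots> = 2 * pi - 2 * pi / K" using Kp by (simp add: field_simps)
    finally show "2 * pi * of_int \<bar>z\<bar> / K \<le> 2 * pi - 2 * pi / K" .
  qed
  finally show ?thesis .
qed

lemma exists_le_avg:
  fixes f :: "nat \<Rightarrow> real"
  assumes "K > 0" "(\<Sum>n<K. f n) = A"
  shows "\<exists>n<K. f n \<le> A / K"
proof (rule ccontr)
  assume "\<not> ?thesis"
  then have "\<forall>n\<in>{..<K}. A / K < f n" by auto
  then have "(\<Sum>n<K. A / K) < (\<Sum>n<K. f n)"
    using assms(1) by (intro sum_strict_mono) auto
  then show False using assms by simp
qed

lemma all_eq_avg:
  fixes f :: "nat \<Rightarrow> real"
  assumes "K > 0" "(\<Sum>n<K. f n) = A" "\<And>n. n < K \<Longrightarrow> A / K \<le> f n"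
  shows "\<And>n. n < K \<Longrightarrow> f n = A / K"
proof (rule ccontr)
  fix n assume n: "n < K" "f n \<noteq> A / K"
  then have "A / K < f n" using assms(3)[OF n(1)] by simp
  then have "(\<Sum>n<K. A / K) < (\<Sum>n<K. f n)"
    using n assms(3) by (intro sum_strict_mono_ex1) auto
  then show False using assms by simp
qed

lemma sort_setup:
  fixes \<theta> :: "'k::finite \<Rightarrow> real"
  obtains \<sigma> :: "nat \<Rightarrow> 'k" where "bij_betw \<sigma> {..<CARD('k)} UNIV"
    and "\<And>i j. i \<le> j \<Longrightarrow> j < CARD('k) \<Longrightarrow> \<theta> (\<sigma> i) \<le> \<theta> (\<sigma> j)"
proof -
  obtain xs where xs: "set xs = (UNIV::'k set)" "distinct xs"
    using finite_distinct_list[of "UNIV::'k set"] by auto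
  define L where "L = sort_key \<theta> xs"
  have L: "set L = UNIV" "distinct L" "length L = CARD('k)"
    unfolding L_def using xs distinct_card[OF xs(2)] by auto
  have "bij_betw ((!) L) {..<CARD('k)} UNIV"
    by (rule bij_betw_nth) (use L in auto)
  moreover have "\<theta> (L ! i) \<le> \<theta> (L ! j)" if "i \<le> j" "j < CARD('k)" for i j
  proof -
    have "sorted (map \<theta> L)" unfolding L_def by simp
    then have "map \<theta> L ! i \<le> map \<theta> L ! j" using that L by (intro sorted_nth_mono) auto
    then show ?thesis using that L by simp
  qed
  ultimately show ?thesis using that by blast
qed


lemma cos_sym: "cos (x - y) = cos (y - x)"
  by (metis cos_minus minus_diff_eq)

lemma angle_core:
  fixes w :: "'k::finite \<Rightarrow> 'a::euclidean_space" and \<theta> :: "'k \<Rightarrow> real"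
  assumes K4: "CARD('k) \<ge> 4"
    and \<theta>0: "\<And>k. 0 \<le> \<theta> k" and \<theta>1: "\<And>k. \<theta> k < 2 * pi"
    and ip: "\<And>i j. w i \<bullet> w j = cos (\<theta> i - \<theta> j)"
  shows "(\<exists>i j. i \<noteq> j \<and> cos (2 * pi / CARD('k)) \<le> w i \<bullet> w j)
       \<and> (\<exists>k. dist_hull (w k) {w j |j. j \<noteq> k} \<le> 1 - cos (2 * pi / CARD('k)))
       \<and> ((\<forall>k. 1 - cos (2 * pi / CARD('k)) \<le> dist_hull (w k) {w j |j. j \<noteq> k})
            \<longrightarrow> (\<forall>i j. i \<noteq> j \<longrightarrow> w i \<bullet> w j \<le> cos (2 * pi / CARD('k))))"
proof -
  define K where "K = CARD('k)"
  have K4': "K \<ge> 4" using K4 unfolding K_def .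
  have Kpos: "K > 0" using K4' by simp
  have Kr: "real K \<ge> 4" using K4' by simp
  obtain \<sigma> where \<sigma>bij: "bij_betw \<sigma> {..<K} UNIV"
    and \<sigma>mono: "\<And>i j. i \<le> j \<Longrightarrow> j < K \<Longrightarrow> \<theta> (\<sigma> i) \<le> \<theta> (\<sigma> j)"
    using sort_setup[of \<theta>] unfolding K_def by blast
  define T where "T n = \<theta> (\<sigma> (n mod K)) + 2 * pi * real (n div K)" for n
  define c where "c = cos (2 * pi / K)"
  have c_le: "2 * pi / K \<le> pi / 2" using Kr by (simp add: field_simps)
  have c_pos: "0 < 2 * pi / K" using Kpos by simp
  have c_le2: "4 * pi / K \<le> pi" using Kr by (simp add: field_simps)
  have unit: "w i \<bullet> w i = 1" for i using ip[of i i] by simp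
  have Tsuc: "T n \<le> T (Suc n)" for n
  proof (cases "Suc (n mod K) = K")
    case True
    then have e: "Suc n mod K = 0" "Suc n div K = Suc (n div K)" by (simp_all add: mod_Suc div_Suc)
    have "T n < 2 * pi + 2 * pi * real (n div K)" unfolding T_def using \<theta>1 by simp
    also have "\<dots> \<le> T (Suc n)" unfolding T_def e using \<theta>0 by (simp add: algebra_simps)
    finally show ?thesis by simp
  next
    case False
    then have e: "Suc n mod K = Suc (n mod K)" "Suc n div K = n div K" by (simp_all add: mod_Suc div_Suc)
    moreover have "Suc (n mod K) < K" using False Kpos mod_less_divisor[of K n] by linarith
    ultimately show ?thesis unfolding T_def using \<sigma>mono[of "n mod K" "Suc (n mod K)"] by simp
  qed
  have Tmono: "T m \<le> T n" if "m \<le> n" for m n using lift_Suc_mono_le[of T, OF Tsuc that] .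
  have TK: "T (n + K) = T n + 2 * pi" for n
  proof -
    have "(n + K) mod K = n mod K" "(n + K) div K = n div K + 1" using Kpos by simp_all
    then show ?thesis unfolding T_def by (simp add: algebra_simps)
  qed
  have Tip: "w (\<sigma> (i mod K)) \<bullet> w (\<sigma> (j mod K)) = cos (T i - T j)" for i j
  proof -
    have "T i - T j = (\<theta> (\<sigma> (i mod K)) - \<theta> (\<sigma> (j mod K))) + 2 * pi * of_int (int (i div K) - int (j div K))"
      unfolding T_def by (simp add: algebra_simps)
    then show ?thesis by (simp only: ip cos_shift_int)
  qed
  have \<sigma>inj: "i = j" if "i < K" "j < K" "\<sigma> i = \<sigma> j" for i j
    using bij_betw_imp_inj_on[OF \<sigma>bij] that by (auto dest: inj_onD)
  have \<sigma>surj: "\<exists>p<K. \<sigma> p = k" for k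
    using bij_betw_imp_surj_on[OF \<sigma>bij] by (metis UNIV_I imageE lessThan_iff)
  have modne: "n mod K \<noteq> (n + j) mod K" if "0 < j" "j < K" for n j
  proof
    assume "n mod K = (n + j) mod K"
    then have "K dvd (n + j) - n" using mod_eq_dvd_iff_nat[of n "n + j" K] by simp
    then have "K dvd j" by simp
    with that show False using nat_dvd_not_less by blast
  qed
  have \<sigma>ne: "\<sigma> (n mod K) \<noteq> \<sigma> ((n + j) mod K)" if "0 < j" "j < K" for n j
    using modne[OF that, of n] \<sigma>inj Kpos by (meson mod_less_divisor)
  have sum1: "(\<Sum>n<K. T (Suc n) - T n) = 2 * pi"
    using sum_lessThan_telescope[of T K] TK[of 0] by simp
  have sum2: "(\<Sum>n<K. T (n + 2) - T n) = 4 * pi"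
  proof -
    have "(\<Sum>n<K. T (n + 2) - T n) = (\<Sum>n<K. T (Suc (Suc n)) - T (Suc n)) + (\<Sum>n<K. T (Suc n) - T n)"
      by (simp add: sum.distrib[symmetric])
    also have "(\<Sum>n<K. T (Suc (Suc n)) - T (Suc n)) = T (Suc K) - T (Suc 0)"
      using sum_lessThan_telescope[of "\<lambda>n. T (Suc n)" K] by simp
    also have "T (Suc K) = T (Suc 0) + 2 * pi" using TK[of 1] by simp
    finally show ?thesis using sum1 by simp
  qed
  have dbound: "dist_hull (w (\<sigma> (Suc n mod K))) {w j |j. j \<noteq> \<sigma> (Suc n mod K)}
      \<le> cos (((T (Suc n) - T n) - (T (n + 2) - T (Suc n))) / 2) - cos ((T (n + 2) - T n) / 2)"
    if hp: "T (n + 2) - T n \<le> pi" for n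
  proof -
    define a where "a = T (Suc n) - T n"
    define b where "b = T (n + 2) - T (Suc n)"
    have ab: "a + b = T (n + 2) - T n" unfolding a_def b_def by simp
    have a0: "0 \<le> a" unfolding a_def using Tmono[of n "Suc n"] by simp
    have b0: "0 \<le> b" unfolding b_def using Tmono[of "Suc n" "n + 2"] by simp
    have wx: "w (\<sigma> (Suc n mod K)) \<bullet> w (\<sigma> (n mod K)) = cos a"
      unfolding Tip a_def ..
    have wy: "w (\<sigma> (Suc n mod K)) \<bullet> w (\<sigma> ((n + 2) mod K)) = cos b"
      unfolding Tip b_def by (rule cos_sym)
    have xy: "w (\<sigma> (n mod K)) \<bullet> w (\<sigma> ((n + 2) mod K)) = cos (a + b)"
      unfolding Tip ab by (rule cos_sym)
    obtain l where l: "0 \<le> l" "l \<le> 1"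
      "norm (w (\<sigma> (Suc n mod K)) - (l *\<^sub>R w (\<sigma> (n mod K)) + (1 - l) *\<^sub>R w (\<sigma> ((n + 2) mod K))))
        \<le> cos ((a - b) / 2) - cos ((a + b) / 2)"
      using foot[OF unit unit unit wx wy xy a0 b0] hp ab by auto
    have ne1: "\<sigma> (n mod K) \<noteq> \<sigma> (Suc n mod K)" using \<sigma>ne[of 1 n] K4' by simp
    have ne2: "\<sigma> ((n + 2) mod K) \<noteq> \<sigma> (Suc n mod K)" using \<sigma>ne[of 1 "Suc n"] K4' by simp
    have "l *\<^sub>R w (\<sigma> (n mod K)) + (1 - l) *\<^sub>R w (\<sigma> ((n + 2) mod K))
        \<in> convex hull {w j |j. j \<noteq> \<sigma> (Suc n mod K)}"
      by (rule convexD[OF convex_convex_hull]) (use l ne1 ne2 in \<open>auto intro!: hull_inc\<close>)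
    then have "dist_hull (w (\<sigma> (Suc n mod K))) {w j |j. j \<noteq> \<sigma> (Suc n mod K)}
      \<le> cos ((a - b) / 2) - cos ((a + b) / 2)"
      using dh_le l(3) by (meson order_trans)
    then show ?thesis unfolding a_def b_def by (simp add: ab[unfolded a_def b_def])
  qed
  have cos_d_le: "cos x \<le> 1" for x :: real by simp
  have P1: "\<exists>i j. i \<noteq> j \<and> c \<le> w i \<bullet> w j"
  proof -
    obtain n where n: "n < K" "T (Suc n) - T n \<le> 2 * pi / K"
      using exists_le_avg[OF Kpos sum1] by auto
    have "c \<le> cos (T (Suc n) - T n)"
      unfolding c_def using n Tmono[of n "Suc n"] c_le by (intro cos_monotone_0_pi_le) auto
    also have "\<dots> = w (\<sigma> (n mod K)) \<bullet> w (\<sigma> (Suc n mod K))"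
      unfolding Tip by (rule cos_sym)
    finally show ?thesis using \<sigma>ne[of 1 n] K4' by auto
  qed
  have P2': "\<exists>k. dist_hull (w k) {w j |j. j \<noteq> k} \<le> 1 - c"
  proof -
    obtain n where n: "n < K" "T (n + 2) - T n \<le> 4 * pi / K"
      using exists_le_avg[OF Kpos sum2] by auto
    have h: "T (n + 2) - T n \<le> pi" using n(2) c_le2 by linarith
    have "c \<le> cos ((T (n + 2) - T n) / 2)"
      unfolding c_def using n Tmono[of n "n + 2"] c_le by (intro cos_monotone_0_pi_le) auto
    then have "dist_hull (w (\<sigma> (Suc n mod K))) {w j |j. j \<noteq> \<sigma> (Suc n mod K)} \<le> 1 - c"
      using dbound[OF h] cos_d_le[of "((T (Suc n) - T n) - (T (n + 2) - T (Suc n))) / 2"] by linarith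
    then show ?thesis by blast
  qed
  have P2: "\<forall>i j. i \<noteq> j \<longrightarrow> w i \<bullet> w j \<le> c"
    if H: "\<forall>k. 1 - c \<le> dist_hull (w k) {w j |j. j \<noteq> k}"
  proof -
    have step1: "4 * pi / K \<le> T (n + 2) - T n" for n
    proof (rule ccontr)
      assume "\<not> ?thesis"
      then have lt: "T (n + 2) - T n < 4 * pi / K" by simp
      then have h: "T (n + 2) - T n \<le> pi" using c_le2 by linarith
      have "c < cos ((T (n + 2) - T n) / 2)"
        unfolding c_def using lt Tmono[of n "n + 2"] c_le by (intro cos_monotone_0_pi) auto
      then have "dist_hull (w (\<sigma> (Suc n mod K))) {w j |j. j \<noteq> \<sigma> (Suc n mod K)} < 1 - c"
        using dbound[OF h] cos_d_le[of "((T (Suc n) - T n) - (T (n + 2) - T (Suc n))) / 2"] by linarith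
      with H show False using not_le by blast
    qed
    have step2: "T (n + 2) - T n = 4 * pi / K" if "n < K" for n
      by (rule all_eq_avg[OF Kpos sum2]) (use step1 that in auto)
    have step3: "T (Suc n) - T n = 2 * pi / K" if n: "n < K" for n
    proof -
      define a where "a = T (Suc n) - T n"
      define b where "b = T (n + 2) - T (Suc n)"
      have ab: "a + b = 4 * pi / K" unfolding a_def b_def using step2[OF n] by simp
      have a0: "0 \<le> a" unfolding a_def using Tmono[of n "Suc n"] by simp
      have b0: "0 \<le> b" unfolding b_def using Tmono[of "Suc n" "n + 2"] by simp
      have h: "T (n + 2) - T n \<le> pi" using step2[OF n] c_le2 by linarith
      have "1 - c \<le> cos ((a - b) / 2) - cos ((T (n + 2) - T n) / 2)"
        using H dbound[OF h] unfolding a_def b_def by (meson order_trans)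
      also have "(T (n + 2) - T n) / 2 = 2 * pi / K" using step2[OF n] by simp
      finally have "1 \<le> cos ((a - b) / 2)" unfolding c_def by simp
      then have "cos 0 \<le> cos \<bar>(a - b) / 2\<bar>" by (simp only: cos_abs_real cos_zero)
      moreover have "\<bar>(a - b) / 2\<bar> \<le> pi" using ab a0 b0 c_le by (simp add: field_simps abs_le_iff)
      ultimately have "\<bar>(a - b) / 2\<bar> \<le> 0" using cos_mono_le_eq[of 0 "\<bar>(a - b) / 2\<bar>"] by auto
      then have "a = b" by simp
      then show ?thesis using ab unfolding a_def by simp
    qed
    have step4: "T p = T 0 + 2 * pi * real p / K" if "p \<le> K" for p
      using that
    proof (induction p)
      case 0 then show ?case by simp
    next
      case (Suc p)
      then have "T (Suc p) = T p + 2 * pi / K" using step3[of p] by simp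
      then show ?case using Suc by (simp add: field_simps)
    qed
    show ?thesis
    proof (intro allI impI)
      fix i j :: 'k assume ij: "i \<noteq> j"
      obtain p where p: "p < K" "\<sigma> p = i" using \<sigma>surj by blast
      obtain q where q: "q < K" "\<sigma> q = j" using \<sigma>surj by blast
      have pq: "p \<noteq> q" using p q ij by auto
      have "w i \<bullet> w j = cos (T p - T q)"
        using Tip[of p q] p q by simp
      also have "T p - T q = 2 * pi * of_int (int p - int q) / K"
        using step4[of p] step4[of q] p q by (simp add: field_simps)
      also have "cos \<dots> \<le> c"
        unfolding c_def using K4' pq p q by (intro reg_cos_int) auto
      finally show "w i \<bullet> w j \<le> c" .
    qed
  qed
  show ?thesis using P1 P2' P2 unfolding c_def K_def by blast
qed


lemma inner2:
  assumes "d0 \<noteq> d1" "(UNIV::'d::finite set) = {d0, d1}"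
  shows "(x::real^'d) \<bullet> y = x $ d0 * y $ d0 + x $ d1 * y $ d1"
  unfolding inner_vec_def assms(2) using assms(1) by simp

lemma twoD_main:
  assumes d2: "CARD('d::finite) = 2" and K4: "CARD('k::finite) \<ge> 4"
  shows "argmax_on (OB :: (real^'k^'d) set) rho_one_vs_rest
       = argmax_on (OB :: (real^'k^'d) set) rho_one_vs_one"
proof -
  obtain d0 d1 :: 'd where dd: "d0 \<noteq> d1" "(UNIV::'d set) = {d0, d1}"
    using d2 by (metis card_2_iff)
  define K where "K = CARD('k)"
  define c where "c = cos (2 * pi / K)"
  have core: "(\<exists>i j. i \<noteq> j \<and> c \<le> column i W \<bullet> column j W)
       \<and> (\<exists>k. DH W k \<le> 1 - c)
       \<and> ((\<forall>k. 1 - c \<le> DH W k) \<longrightarrow> QQ c W)" if W: "(W::real^'k^'d) \<in> OB" for W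
  proof -
    have "\<exists>t. 0 \<le> t \<and> t < 2 * pi \<and> column k W $ d0 = cos t \<and> column k W $ d1 = sin t" for k
    proof -
      have "column k W \<bullet> column k W = 1" using OB_unit[OF W, of k] by (simp add: dot_square_norm)
      then have "(column k W $ d0)^2 + (column k W $ d1)^2 = 1"
        unfolding inner2[OF dd] by (simp add: power2_eq_square)
      then obtain t where "0 \<le> t" "t < 2 * pi" "column k W $ d0 = cos t" "column k W $ d1 = sin t"
        by (rule sincos_total_2pi)
      then show ?thesis by blast
    qed
    then obtain \<theta> where \<theta>: "\<And>k. 0 \<le> \<theta> k \<and> \<theta> k < 2 * pi \<and> column k W $ d0 = cos (\<theta> k) \<and> column k W $ d1 = sin (\<theta> k)"
      by metis
    have ip: "column i W \<bullet> column j W = cos (\<theta> i - \<theta> j)" for i j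
      unfolding inner2[OF dd] using \<theta>[of i] \<theta>[of j] by (simp add: cos_diff)
    have "(\<exists>i j. i \<noteq> j \<and> cos (2 * pi / CARD('k)) \<le> column i W \<bullet> column j W)
       \<and> (\<exists>k. dist_hull (column k W) {column j W |j. j \<noteq> k} \<le> 1 - cos (2 * pi / CARD('k)))
       \<and> ((\<forall>k. 1 - cos (2 * pi / CARD('k)) \<le> dist_hull (column k W) {column j W |j. j \<noteq> k})
            \<longrightarrow> (\<forall>i j. i \<noteq> j \<longrightarrow> column i W \<bullet> column j W \<le> cos (2 * pi / CARD('k))))"
      by (rule angle_core[OF K4]) (use \<theta> ip in auto)
    then show ?thesis unfolding c_def K_def DH_def QQ_def .
  qed
  have P3: "\<exists>W::real^'k^'d. W \<in> OB \<and> QQ c W"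
  proof -
    obtain h where h: "bij_betw h {0..<K} (UNIV::'k set)"
      using ex_bij_betw_nat_finite[of "UNIV::'k set"] unfolding K_def by auto
    define g where "g = inv_into {0..<K} h"
    have g: "bij_betw g UNIV {0..<K}" unfolding g_def by (rule bij_betw_inv_into[OF h])
    define \<phi> where "\<phi> k = 2 * pi * real (g k) / K" for k
    define v :: "'k \<Rightarrow> real^'d" where "v k = (\<chi> r. if r = d0 then cos (\<phi> k) else sin (\<phi> k))" for k
    define W :: "real^'k^'d" where "W = (\<chi> r j. v j $ r)"
    have col: "column i W = v i" for i unfolding W_def by (rule column_mk)
    have vv: "v i \<bullet> v j = cos (\<phi> i - \<phi> j)" for i j
      unfolding inner2[OF dd] v_def using dd(1) by (simp add: cos_diff)
    have "W \<in> OB" unfolding OB_def by (auto simp: col norm_eq_sqrt_inner vv)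
    moreover have "QQ c W" unfolding QQ_def col vv
    proof (intro allI impI)
      fix i j :: 'k assume ij: "i \<noteq> j"
      have gi: "g i < K" "g j < K" using g by (auto simp: bij_betw_def)
      have gij: "g i \<noteq> g j" using g ij by (auto simp: bij_betw_def inj_on_def)
      have "\<phi> i - \<phi> j = 2 * pi * of_int (int (g i) - int (g j)) / K"
        unfolding \<phi>_def by (simp add: diff_divide_distrib algebra_simps)
      also have "cos \<dots> \<le> c"
        unfolding c_def using K4 gi gij unfolding K_def by (intro reg_cos_int) auto
      finally show "cos (\<phi> i - \<phi> j) \<le> c" .
    qed
    ultimately show ?thesis by blast
  qed
  show ?thesis
  proof (rule main_abstract[where c = c])
    show "CARD('k) \<ge> 2" using K4 by simp
    show "c \<le> 1" unfolding c_def by simp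
  qed (use core P3 in auto)
qed


theorem mainTheorem9:
  assumes "CARD('k::finite) \<ge> 2"
    and "CARD('d::finite) = 2 \<or> CARD('k) \<le> CARD('d) + 1"
  shows "argmax_on (OB :: (real^'k^'d) set) rho_one_vs_rest
       = argmax_on (OB :: (real^'k^'d) set) rho_one_vs_one"
proof (cases "CARD('k) \<le> CARD('d) + 1")
  case True
  show ?thesis
  proof (rule main_abstract[where c = "- 1 / (real CARD('k) - 1)"])
    show "CARD('k) \<ge> 2" by (rule assms(1))
    have "real CARD('k) - 1 \<ge> 1" using assms(1) by simp
    then have "- 1 / (real CARD('k) - 1) \<le> 0" by (intro divide_nonpos_pos) auto
    then show "- 1 / (real CARD('k) - 1) \<le> 1" by (rule order_trans) simp
    show "\<exists>i j. i \<noteq> j \<and> - 1 / (real CARD('k) - 1) \<le> column i W \<bullet> column j W"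
      if "(W::real^'k^'d) \<in> OB" for W
      by (rule P1_simplex[OF assms(1) that])
    show "\<exists>k. DH W k \<le> 1 - (- 1 / (real CARD('k) - 1))" if "(W::real^'k^'d) \<in> OB" for W
      by (rule P2'_simplex[OF assms(1) that])
    show "QQ (- 1 / (real CARD('k) - 1)) W"
      if "(W::real^'k^'d) \<in> OB" "\<forall>k. 1 - (- 1 / (real CARD('k) - 1)) \<le> DH W k" for W
      by (rule P2_simplex[OF assms(1) that])
    show "\<exists>W::real^'k^'d. W \<in> OB \<and> QQ (- 1 / (real CARD('k) - 1)) W"
      by (rule P3_simplex[OF assms(1) True])
  qed
next
  case False
  then have d2: "CARD('d) = 2" using assms(2) by simp
  have "CARD('k) \<ge> 4" using False d2 by simp
  then show ?thesis by (rule twoD_main[OF d2])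
qed

end
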